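(* There is an absolute constant $c_1>0$ such that for each $b\in(0,\pi]$, each $n\in\mathbb{N}$ and every trigonometric polynomial $T_n\in\mathcal{T}_n$, $$\|F_1-T_n\|_{[-b,b]}\ge \frac{c_1 b}{n},$$ where $F_1(x)=|x|$. Moreover one can take $c_1\ge (80c_0)^{-1}$, where $c_0<10$ is an absolute constant such that $\|T_n'\|_{[-b/2,b/2]}\le \frac{c_0}{b}n\|T_n\|_{[-b,b]}$ for all $b\in(0,\pi)$, $n\in\mathbb{N}$ and all odd $T_n\in\mathcal{T}_n$.
   Context: $\mathcal{T}_n$ is the space of real trigonometric polynomials of degree $\le n$. For a function $g$ on $[a,b]$, $\|g\|_{[a,b]}:=\max_{x\in[a,b]}|g(x)|$. *)

theory Defs
  imports "HOL-Analysis.Analysis"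
begin

definition trigpoly :: "nat \<Rightarrow> (real \<Rightarrow> real) set" where
  "trigpoly n = {T. \<exists>a b :: nat \<Rightarrow> real. \<forall>x.
      T x = a 0 + (\<Sum>k=1..n. a k * cos (real k * x) + b k * sin (real k * x))}"

definition supnorm_on :: "real \<Rightarrow> real \<Rightarrow> (real \<Rightarrow> real) \<Rightarrow> real" where
  "supnorm_on a b g = (SUP x\<in>{a..b}. \<bar>g x\<bar>)"

definition bernstein_const :: "real \<Rightarrow> bool" where
  "bernstein_const c0 \<longleftrightarrow> (\<forall>b n T. 0 < b \<and> b < pi \<and> n \<ge> 1 \<and> T \<in> trigpoly n
      \<and> (\<forall>x. T (-x) = - T x) \<longrightarrow>
      supnorm_on (-b/2) (b/2) (deriv T) \<le> c0 / b * real n * supnorm_on (-b) b T)"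

end

theory Submission
  imports Defs "HOL-Computational_Algebra.Polynomial"
begin


lemma trigpolyI:
  assumes "\<And>x. T x = a 0 + (\<Sum>k=1..n. a k * cos (real k * x) + b k * sin (real k * x))"
  shows "T \<in> trigpoly n"
  using assms unfolding trigpoly_def by blast

lemma trigpolyD:
  assumes "T \<in> trigpoly n"
  shows "\<exists>a b. \<forall>x. T x = a 0 + (\<Sum>k=1..n. a k * cos (real k * x) + b k * sin (real k * x))"
  using assms unfolding trigpoly_def by blast

lemma trigpoly_add:
  assumes "S \<in> trigpoly n" "T \<in> trigpoly n"
  shows "(\<lambda>x. S x + T x) \<in> trigpoly n"
proof -
  obtain a b where S: "\<And>x. S x = a 0 + (\<Sum>k=1..n. a k * cos (real k * x) + b k * sin (real k * x))"
    using trigpolyD[OF assms(1)] by blast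
  obtain c d where T: "\<And>x. T x = c 0 + (\<Sum>k=1..n. c k * cos (real k * x) + d k * sin (real k * x))"
    using trigpolyD[OF assms(2)] by blast
  show ?thesis
    by (rule trigpolyI[where a="\<lambda>k. a k + c k" and b="\<lambda>k. b k + d k"])
       (simp add: S T sum.distrib algebra_simps)
qed

lemma trigpoly_scale:
  assumes "T \<in> trigpoly n"
  shows "(\<lambda>x. c * T x) \<in> trigpoly n"
proof -
  obtain a b where T: "\<And>x. T x = a 0 + (\<Sum>k=1..n. a k * cos (real k * x) + b k * sin (real k * x))"
    using trigpolyD[OF assms] by blast
  show ?thesis
    by (rule trigpolyI[where a="\<lambda>k. c * a k" and b="\<lambda>k. c * b k"])
       (simp add: T sum_distrib_left algebra_simps)
qed

lemma trigpoly_diff: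
  assumes "S \<in> trigpoly n" "T \<in> trigpoly n"
  shows "(\<lambda>x. S x - T x) \<in> trigpoly n"
  using trigpoly_add[OF assms(1) trigpoly_scale[OF assms(2), of "-1"]] by simp

lemma trigpoly_shift:
  assumes "T \<in> trigpoly n"
  shows "(\<lambda>x. T (x + h)) \<in> trigpoly n"
proof -
  obtain a b where T: "\<And>x. T x = a 0 + (\<Sum>k=1..n. a k * cos (real k * x) + b k * sin (real k * x))"
    using trigpolyD[OF assms] by blast
  show ?thesis
    by (rule trigpolyI[where a="\<lambda>k. a k * cos (real k * h) + b k * sin (real k * h)"
          and b="\<lambda>k. b k * cos (real k * h) - a k * sin (real k * h)"])
       (simp add: T distrib_left cos_add sin_add algebra_simps)
qed

lemma trigpoly_reflect:
  assumes "T \<in> trigpoly n"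
  shows "(\<lambda>x. T (- x)) \<in> trigpoly n"
proof -
  obtain a b where T: "\<And>x. T x = a 0 + (\<Sum>k=1..n. a k * cos (real k * x) + b k * sin (real k * x))"
    using trigpolyD[OF assms] by blast
  show ?thesis
    by (rule trigpolyI[where a="a" and b="\<lambda>k. - b k"]) (simp add: T)
qed

lemma trigpoly_cos:
  assumes "1 \<le> n"
  shows "(\<lambda>x. cos (real n * x + p)) \<in> trigpoly n"
proof (rule trigpolyI[where a="\<lambda>k. if k = n then cos p else 0" and b="\<lambda>k. if k = n then - sin p else 0"])
  fix x
  have "(\<Sum>k=1..n. (if k = n then cos p else 0) * cos (real k * x) + (if k = n then - sin p else 0) * sin (real k * x))
      = (\<Sum>k=1..n. if k = n then cos p * cos (real n * x) - sin p * sin (real n * x) else 0)"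
    by (rule sum.cong) auto
  also have "\<dots> = cos (real n * x + p)" using assms by (simp add: cos_add algebra_simps)
  finally show "cos (real n * x + p) = (if 0 = n then cos p else 0) + (\<Sum>k=1..n. (if k = n then cos p else 0) * cos (real k * x) + (if k = n then - sin p else 0) * sin (real k * x))"
    using assms by simp
qed

lemma trigpoly_deriv:
  assumes "T \<in> trigpoly n"
  shows "\<exists>T'. (\<forall>x. (T has_real_derivative T' x) (at x)) \<and> T' \<in> trigpoly n"
proof -
  obtain a b where T: "\<And>x. T x = a 0 + (\<Sum>k=1..n. a k * cos (real k * x) + b k * sin (real k * x))"
    using trigpolyD[OF assms] by blast
  have Teq: "T = (\<lambda>x. a 0 + (\<Sum>k=1..n. a k * cos (real k * x) + b k * sin (real k * x)))"
    using T by auto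
  define T' where "T' = (\<lambda>x. (\<Sum>k=1..n. (b k * real k) * cos (real k * x) + (- a k * real k) * sin (real k * x)))"
  have "\<forall>x. (T has_real_derivative T' x) (at x)"
    unfolding Teq T'_def
    by (auto intro!: derivative_eq_intros sum.cong simp: algebra_simps)
  moreover have "T' \<in> trigpoly n"
    by (rule trigpolyI[where a="\<lambda>k. if k = 0 then 0 else b k * real k" and b="\<lambda>k. - a k * real k"])
       (auto simp: T'_def intro!: sum.cong)
  ultimately show ?thesis by blast
qed

lemma trigpoly_deriv_in:
  assumes "T \<in> trigpoly n"
  shows "deriv T \<in> trigpoly n" "\<And>x. (T has_real_derivative deriv T x) (at x)"
proof -
  obtain T' where T': "\<forall>x. (T has_real_derivative T' x) (at x)" "T' \<in> trigpoly n"
    using trigpoly_deriv[OF assms] by blast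
  have "deriv T = T'" using T'(1) DERIV_imp_deriv by blast
  then show "deriv T \<in> trigpoly n" "\<And>x. (T has_real_derivative deriv T x) (at x)" using T' by auto
qed

lemma trigpoly_cont:
  assumes "T \<in> trigpoly n"
  shows "continuous_on S T"
  using trigpoly_deriv_in(2)[OF assms]
  by (meson DERIV_isCont continuous_at_imp_continuous_on)



lemma cis_inj_period:
  assumes "u \<in> {s..<s+2*pi}" "v \<in> {s..<s+2*pi}" "cis u = cis v"
  shows "u = v"
proof -
  have "cis (u - v) = 1" using assms(3) by (simp add: cis_divide[symmetric])
  then have "cos (u - v) = 1" by (metis cis.sel(1) one_complex.sel(1))
  then obtain m :: int where m: "u - v = real_of_int m * 2 * pi" using cos_one_2pi_int by blast
  have uv: "u - v < 2 * pi" "v - u < 2 * pi" using assms(1,2) by auto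
  have "m = 0"
  proof (rule ccontr)
    assume "m \<noteq> 0"
    then have "m \<ge> 1 \<or> m \<le> -1" by linarith
    moreover have "(1::real) * (2*pi) \<le> real_of_int m * (2*pi)" if "m \<ge> 1" using that by (intro mult_right_mono) auto
    moreover have "real_of_int m * (2*pi) \<le> (-1) * (2*pi)" if "m \<le> -1" using that by (intro mult_right_mono) auto
    ultimately show False using uv m by (auto simp: algebra_simps)
  qed
  then show ?thesis using m by simp
qed

lemma trigpoly_complex:
  assumes "\<And>x. T x = a 0 + (\<Sum>k=1..n. a k * cos (real k * x) + b k * sin (real k * x))"
  defines "P \<equiv> monom (complex_of_real (a 0)) n
      + (\<Sum>k=1..n. monom (complex_of_real (a k) / 2 - \<i> * complex_of_real (b k) / 2) (n + k)
                  + monom (complex_of_real (a k) / 2 + \<i> * complex_of_real (b k) / 2) (n - k))"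
  shows "poly P (cis x) = cis (real n * x) * complex_of_real (T x)" "degree P \<le> 2 * n"
proof -
  have tm: "(complex_of_real (a k) / 2 - \<i> * complex_of_real (b k) / 2) * cis x ^ (n + k)
      + (complex_of_real (a k) / 2 + \<i> * complex_of_real (b k) / 2) * cis x ^ (n - k)
      = cis (real n * x) * complex_of_real (a k * cos (real k * x) + b k * sin (real k * x))"
    if "k \<in> {1..n}" for k
  proof -
    have e1: "cis x ^ (n + k) = cis (real n * x) * cis (real k * x)"
      unfolding Complex.DeMoivre by (simp add: cis_mult distrib_right)
    have e2: "cis x ^ (n - k) = cis (real n * x) * cis (- (real k * x))"
      using that unfolding Complex.DeMoivre by (simp add: cis_mult of_nat_diff algebra_simps)
    have e3: "(complex_of_real (a k) / 2 - \<i> * complex_of_real (b k) / 2) * cis (real k * x)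
      + (complex_of_real (a k) / 2 + \<i> * complex_of_real (b k) / 2) * cis (- (real k * x))
      = complex_of_real (a k * cos (real k * x) + b k * sin (real k * x))"
      by (simp add: complex_eq_iff field_simps)
    show ?thesis unfolding e1 e2 e3[symmetric] by (simp add: algebra_simps)
  qed
  have "poly P (cis x) = complex_of_real (a 0) * cis x ^ n + (\<Sum>k=1..n. 
        (complex_of_real (a k) / 2 - \<i> * complex_of_real (b k) / 2) * cis x ^ (n + k)
      + (complex_of_real (a k) / 2 + \<i> * complex_of_real (b k) / 2) * cis x ^ (n - k))"
    by (simp add: P_def poly_sum poly_monom)
  also have "\<dots> = cis (real n * x) * complex_of_real (a 0) + (\<Sum>k=1..n. cis (real n * x) * complex_of_real (a k * cos (real k * x) + b k * sin (real k * x)))"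
    using tm by (simp add: Complex.DeMoivre)
  also have "\<dots> = cis (real n * x) * complex_of_real (T x)"
    by (simp add: assms(1) sum_distrib_left distrib_left)
  finally show "poly P (cis x) = cis (real n * x) * complex_of_real (T x)" .
  show "degree P \<le> 2 * n"
    unfolding P_def
    by (intro degree_add_le degree_sum_le) (auto intro: order.trans[OF degree_monom_le])
qed

lemma trigpoly_zeros:
  assumes "T \<in> trigpoly n" "finite Z" "Z \<subseteq> {s..<s+2*pi}" "card Z > 2*n" "\<forall>z\<in>Z. T z = 0"
  shows "T x = 0"
proof -
  obtain a b where T: "\<And>x. T x = a 0 + (\<Sum>k=1..n. a k * cos (real k * x) + b k * sin (real k * x))"
    using trigpolyD[OF assms(1)] by blast
  define P where "P \<equiv> monom (complex_of_real (a 0)) n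
      + (\<Sum>k=1..n. monom (complex_of_real (a k) / 2 - \<i> * complex_of_real (b k) / 2) (n + k)
                  + monom (complex_of_real (a k) / 2 + \<i> * complex_of_real (b k) / 2) (n - k))"
  note PP = trigpoly_complex[OF T, folded P_def]
  have "P = 0"
  proof (rule ccontr)
    assume "P \<noteq> 0"
    have sub: "cis ` Z \<subseteq> {z. poly P z = 0}" using PP(1) assms(5) by auto
    have inj: "inj_on cis Z" using assms(3) cis_inj_period by (meson inj_onI subsetD)
    have "card Z = card (cis ` Z)" using card_image[OF inj] by simp
    also have "\<dots> \<le> card {z. poly P z = 0}"
      by (rule card_mono[OF poly_roots_finite[OF \<open>P \<noteq> 0\<close>] sub])
    also have "\<dots> \<le> degree P" by (rule card_poly_roots_bound[OF \<open>P \<noteq> 0\<close>])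
    finally show False using PP(2) assms(4) by linarith
  qed
  then have "cis (real n * x) * complex_of_real (T x) = 0" using PP(1)[of x] by simp
  then show ?thesis by simp
qed



lemma bernstein_unit:
  assumes U: "U \<in> trigpoly n" and n: "1 \<le> n" and bd: "\<forall>x. \<bar>U x\<bar> \<le> 1/2"
  shows "deriv U x0 \<le> real n"
proof (rule ccontr)
  assume "\<not> deriv U x0 \<le> real n"
  then have big: "deriv U x0 > real n" by simp
  define u0 where "u0 = U x0"
  have u0: "\<bar>u0\<bar> \<le> 1/2" using bd u0_def by auto
  define A where "A = arccos u0"
  have A: "0 < A" "A < pi"
    using u0 arccos_lt_bounded[of u0] unfolding A_def by auto
  define p where "p = - A - real n * x0"
  define c where "c = (\<lambda>x. cos (real n * x + p))"
  define D where "D = (\<lambda>x. U x - c x)"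
  have npos: "real n > 0" using n by simp
  have Dtp: "D \<in> trigpoly n" unfolding D_def c_def
    by (rule trigpoly_diff[OF U trigpoly_cos[OF n]])
  have Dx0: "D x0 = 0"
    using u0 by (simp add: D_def c_def p_def u0_def A_def cos_arccos_abs)
  have cder: "(c has_real_derivative (- sin (real n * x0 + p) * real n)) (at x0)"
    unfolding c_def by (auto intro!: derivative_eq_intros)
  have sinv: "- sin (real n * x0 + p) = sin A"
    by (simp add: p_def)
  have "sin A \<le> 1" by simp
  have Dder: "(D has_real_derivative (deriv U x0 - sin A * real n)) (at x0)"
    unfolding D_def using DERIV_diff[OF trigpoly_deriv_in(2)[OF U] cder] sinv by simp
  have dpos: "deriv U x0 - sin A * real n > 0"
  proof -
    have "sin A * real n \<le> 1 * real n" using npos by (intro mult_right_mono) auto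
    then show ?thesis using big by simp
  qed
  define s where "s = x0 + (A - pi) / real n"
  define t where "t = (\<lambda>j::nat. s + real j * pi / real n)"
  have s_lt: "s < x0" unfolding s_def using A npos by (simp add: divide_neg_pos)
  have t1: "t 1 > x0" unfolding t_def s_def using A npos by (simp add: field_simps)
  have ct: "c (t j) = - ((-1) ^ j)" for j
  proof -
    have "real n * t j + p = real j * pi - pi"
      unfolding t_def s_def p_def using npos by (simp add: field_simps)
    then show ?thesis unfolding c_def by (simp add: cos_diff cos_npi)
  qed
  have Dt_even: "D (t j) > 0" if "even j" for j
    using ct[of j] that bd[rule_format, of "t j"] unfolding D_def by (auto simp: abs_le_iff)
  have Dt_odd: "D (t j) < 0" if "odd j" for j
    using ct[of j] that bd[rule_format, of "t j"] unfolding D_def by (auto simp: abs_le_iff)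
  have contD: "continuous_on S D" for S using trigpoly_cont[OF Dtp] .
  have t_mono: "t i < t j" if "i < j" for i j
    unfolding t_def using that npos by (simp add: field_simps)
  have zero_between: "\<exists>z. t j < z \<and> z < t (Suc j) \<and> D z = 0" for j
  proof (cases "even j")
    case True
    then have a: "D (t j) > 0" and b: "D (t (Suc j)) < 0" using Dt_even Dt_odd by auto
    have le: "t j \<le> t (Suc j)" using t_mono[of j "Suc j"] by simp
    obtain z where z: "z \<in> {t j..t (Suc j)}" "D z = 0"
      using IVT2'[of D "t (Suc j)" 0 "t j", OF _ _ le contD] a b by auto
    then have "z \<noteq> t j" "z \<noteq> t (Suc j)" using a b by auto
    then show ?thesis using z by (intro exI[of _ z]) auto
  next
    case False
    then have a: "D (t j) < 0" and b: "D (t (Suc j)) > 0" using Dt_even Dt_odd by auto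
    have le: "t j \<le> t (Suc j)" using t_mono[of j "Suc j"] by simp
    obtain z where z: "z \<in> {t j..t (Suc j)}" "D z = 0"
      using IVT'[of D "t j" 0 "t (Suc j)", OF _ _ le contD] a b by auto
    then have "z \<noteq> t j" "z \<noteq> t (Suc j)" using a b by auto
    then show ?thesis using z by (intro exI[of _ z]) auto
  qed
  then obtain zf where zf: "\<And>j. t j < zf j \<and> zf j < t (Suc j) \<and> D (zf j) = 0" by metis
  obtain d where d: "d > 0" "\<And>h. h > 0 \<Longrightarrow> h < d \<Longrightarrow> D (x0 - h) < D x0"
    using DERIV_pos_inc_left[OF Dder dpos] by blast
  define y1 where "y1 = x0 - min (d/2) ((x0 - s)/2)"
  have hpos: "min (d/2) ((x0 - s)/2) > 0" "min (d/2) ((x0 - s)/2) < d" "min (d/2) ((x0 - s)/2) < x0 - s"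
    using d s_lt by (auto simp: min_def)
  have y1: "s < y1" "y1 < x0" "D y1 < 0"
    using hpos d(2)[OF hpos(1,2)] Dx0 unfolding y1_def by auto
  have Ds: "D s > 0" using Dt_even[of 0] unfolding t_def by simp
  obtain w where w: "w \<in> {s..y1}" "D w = 0"
    using IVT2'[of D y1 0 s, OF _ _ _ contD] Ds y1 by auto
  have "w \<noteq> s" using w Ds by auto
  then have w2: "s < w" "w < x0" using w y1 by auto
  define Z where "Z = {w, x0} \<union> zf ` {1..<2*n}"
  have zf_mono: "zf i < zf j" if "i < j" for i j
  proof -
    have "zf i < t (Suc i)" using zf by blast
    also have "t (Suc i) \<le> t j" using t_mono[of "Suc i" j] that by (cases "Suc i = j") auto
    also have "t j < zf j" using zf by blast
    finally show ?thesis .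
  qed
  have inj: "inj_on zf {1..<2*n}"
    by (rule inj_onI) (metis linorder_neq_iff zf_mono less_irrefl)
  have disj: "{w, x0} \<inter> zf ` {1..<2*n} = {}"
  proof -
    have "zf j > x0" if "j \<ge> 1" for j
    proof -
      have "x0 < t 1" by (rule t1)
      also have "t 1 \<le> t j" using t_mono[of 1 j] that by (cases "j = 1") auto
      also have "t j < zf j" using zf by blast
      finally show ?thesis .
    qed
    then show ?thesis using w2 by force
  qed
  have cardZ: "card Z = 2 * n + 1"
  proof -
    have "card Z = card {w, x0} + card (zf ` {1..<2*n})"
      unfolding Z_def by (rule card_Un_disjoint) (use disj in auto)
    also have "card {w, x0} = 2" using w2 by simp
    also have "card (zf ` {1..<2*n}) = 2 * n - 1" using card_image[OF inj] by simp
    finally show ?thesis using n by simp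
  qed
  have tlast: "t (2 * n) = s + 2 * pi" unfolding t_def using npos by (simp add: field_simps)
  have Zsub: "Z \<subseteq> {s..<s+2*pi}"
  proof
    fix z assume "z \<in> Z"
    then consider "z = w" | "z = x0" | j where "j \<in> {1..<2*n}" "z = zf j" unfolding Z_def by auto
    then show "z \<in> {s..<s+2*pi}"
    proof cases
      case 1 then show ?thesis using w2 t1 tlast t_mono[of 1 "2*n"] n by auto
    next
      case 2 then show ?thesis using s_lt t1 tlast t_mono[of 1 "2*n"] n by auto
    next
      case 3
      have "s \<le> t j" using t_mono[of 0 j] 3 unfolding t_def by (cases "j = 0") auto
      moreover have "t (Suc j) \<le> t (2 * n)" using t_mono[of "Suc j" "2*n"] 3 by (cases "Suc j = 2 * n") auto
      ultimately show ?thesis using zf[of j] 3 tlast by auto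
    qed
  qed
  have "\<forall>z\<in>Z. D z = 0" unfolding Z_def using w Dx0 zf by auto
  then have "D s = 0"
    using trigpoly_zeros[OF Dtp _ Zsub, of s] cardZ unfolding Z_def by auto
  then show False using Ds by simp
qed

lemma bernstein:
  assumes T: "T \<in> trigpoly n" and n: "1 \<le> n" and M: "M > 0" and bd: "\<forall>x. \<bar>T x\<bar> \<le> M"
  shows "\<bar>deriv T x\<bar> \<le> 2 * real n * M"
proof -
  define U where "U = (\<lambda>x. (1 / (2*M)) * T x)"
  define V where "V = (\<lambda>x. (- 1 / (2*M)) * T x)"
  have U: "U \<in> trigpoly n" unfolding U_def by (rule trigpoly_scale[OF T])
  have V: "V \<in> trigpoly n" unfolding V_def by (rule trigpoly_scale[OF T])
  have Ub: "\<forall>x. \<bar>U x\<bar> \<le> 1/2" using bd M unfolding U_def by (auto simp: abs_mult divide_simps)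
  have Vb: "\<forall>x. \<bar>V x\<bar> \<le> 1/2" using bd M unfolding V_def by (auto simp: abs_mult divide_simps)
  have dU: "deriv U x = (1 / (2*M)) * deriv T x"
    unfolding U_def by (rule DERIV_imp_deriv, rule DERIV_cmult, rule trigpoly_deriv_in(2)[OF T])
  have dV: "deriv V x = (- 1 / (2*M)) * deriv T x"
    unfolding V_def by (rule DERIV_imp_deriv, rule DERIV_cmult, rule trigpoly_deriv_in(2)[OF T])
  have "deriv T x / (2 * M) \<le> real n" using bernstein_unit[OF U n Ub, of x] dU by simp
  moreover have "- deriv T x / (2 * M) \<le> real n" using bernstein_unit[OF V n Vb, of x] dV by simp
  ultimately show ?thesis using M by (simp add: abs_le_iff divide_simps mult.commute mult.left_commute)
qed



definition cospoly :: "nat \<Rightarrow> (real \<Rightarrow> real) set" where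
  "cospoly n = {f. \<exists>a. \<forall>x. f x = (\<Sum>k\<le>n. a k * cos (real k * x))}"

lemma cospolyI: "(\<And>x. f x = (\<Sum>k\<le>n. a k * cos (real k * x))) \<Longrightarrow> f \<in> cospoly n"
  unfolding cospoly_def by blast

lemma cospolyD: "f \<in> cospoly n \<Longrightarrow> \<exists>a. \<forall>x. f x = (\<Sum>k\<le>n. a k * cos (real k * x))"
  unfolding cospoly_def by blast

lemma cp_add: "f \<in> cospoly n \<Longrightarrow> g \<in> cospoly n \<Longrightarrow> (\<lambda>x. f x + g x) \<in> cospoly n"
proof -
  assume "f \<in> cospoly n" "g \<in> cospoly n"
  then obtain a c where "\<forall>x. f x = (\<Sum>k\<le>n. a k * cos (real k * x))" "\<forall>x. g x = (\<Sum>k\<le>n. c k * cos (real k * x))"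
    using cospolyD by metis
  then show ?thesis
    by (intro cospolyI[where a="\<lambda>k. a k + c k"]) (simp add: sum.distrib algebra_simps)
qed

lemma cp_scale: "f \<in> cospoly n \<Longrightarrow> (\<lambda>x. c * f x) \<in> cospoly n"
proof -
  assume "f \<in> cospoly n"
  then obtain a where "\<forall>x. f x = (\<Sum>k\<le>n. a k * cos (real k * x))"
    using cospolyD by metis
  then show ?thesis
    by (intro cospolyI[where a="\<lambda>k. c * a k"]) (simp add: sum_distrib_left algebra_simps)
qed

lemma cp_zero: "(\<lambda>x. 0) \<in> cospoly n"
  by (rule cospolyI[where a="\<lambda>k. 0"]) simp

lemma cp_cos: "k \<le> n \<Longrightarrow> (\<lambda>x. cos (real k * x)) \<in> cospoly n"
proof (rule cospolyI[where a="\<lambda>j. if j = k then 1 else 0"])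
  fix x assume "k \<le> n"
  have "(\<Sum>j\<le>n. (if j = k then 1 else 0) * cos (real j * x)) = (\<Sum>j\<le>n. if j = k then cos (real j * x) else 0)"
    by (rule sum.cong) auto
  then show "cos (real k * x) = (\<Sum>j\<le>n. (if j = k then 1 else 0) * cos (real j * x))"
    using \<open>k \<le> n\<close> by simp
qed

lemma cp_const: "(\<lambda>x. c) \<in> cospoly n"
  using cp_scale[OF cp_cos[of 0 n], of c] by simp

lemma cp_sum: "finite I \<Longrightarrow> (\<And>i. i \<in> I \<Longrightarrow> f i \<in> cospoly n) \<Longrightarrow> (\<lambda>x. \<Sum>i\<in>I. f i x) \<in> cospoly n"
proof (induction I rule: finite_induct)
  case empty then show ?case using cp_zero by simp
next
  case (insert i I)
  then show ?case using cp_add[of "f i" n "\<lambda>x. \<Sum>i\<in>I. f i x"] by simp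
qed

lemma cp_mult_cos:
  assumes "f \<in> cospoly n"
  shows "(\<lambda>x. cos x * f x) \<in> cospoly (Suc n)"
proof -
  obtain a where a: "\<forall>x. f x = (\<Sum>k\<le>n. a k * cos (real k * x))"
    using cospolyD[OF assms] by metis
  have eq: "(\<lambda>x. cos x * f x) = (\<lambda>x. \<Sum>k\<le>n. a k * (cos x * cos (real k * x)))"
    using a by (simp add: sum_distrib_left algebra_simps)
  have "(\<lambda>x. a k * (cos x * cos (real k * x))) \<in> cospoly (Suc n)" if "k \<le> n" for k
  proof (cases "k = 0")
    case True
    then show ?thesis using cp_scale[OF cp_cos[of 1 "Suc n"], of "a k"] by simp
  next
    case False
    have pe: "cos x * cos (real k * x) = 1/2 * cos (real (Suc k) * x) + 1/2 * cos (real (k - 1) * x)" for x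
    proof -
      have "cos (real (Suc k) * x) = cos (real k * x + x)" by (simp add: algebra_simps)
      moreover have "cos (real (k - 1) * x) = cos (real k * x - x)" using False by (simp add: of_nat_diff algebra_simps)
      ultimately show ?thesis by (simp add: cos_add cos_diff field_simps)
    qed
    have "(\<lambda>x. a k * (1/2 * cos (real (Suc k) * x) + 1/2 * cos (real (k - 1) * x))) \<in> cospoly (Suc n)"
      using that by (intro cp_scale cp_add cp_cos) auto
    then show ?thesis using pe by simp
  qed
  then show ?thesis unfolding eq by (intro cp_sum) auto
qed

lemma cp_poly: "degree p \<le> n \<Longrightarrow> (\<lambda>x. poly p (cos x)) \<in> cospoly n"
proof (induction n arbitrary: p)
  case 0
  then have "degree p = 0" by simp
  then have "p = [:coeff p 0:]" by (metis degree_0_id)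
  then have "(\<lambda>x. poly p (cos x)) = (\<lambda>x. coeff p 0)" by (metis poly_pCons poly_0 mult_zero_right add_0_right)
  then show ?case using cp_const by simp
next
  case (Suc n)
  obtain c q where p: "p = pCons c q" by (cases p) auto
  have "degree q \<le> n" using Suc.prems p by (cases "q = 0") auto
  then have "(\<lambda>x. cos x * poly q (cos x)) \<in> cospoly (Suc n)" using Suc.IH cp_mult_cos by blast
  then have "(\<lambda>x. c + cos x * poly q (cos x)) \<in> cospoly (Suc n)" using cp_add[OF cp_const] by blast
  then show ?case using p by simp
qed

lemma cospoly_trigpoly: "f \<in> cospoly n \<Longrightarrow> f \<in> trigpoly n"
proof -
  assume "f \<in> cospoly n"
  then obtain a where a: "\<forall>x. f x = (\<Sum>k\<le>n. a k * cos (real k * x))"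
    using cospolyD by metis
  have "{..n} = insert 0 {1..n}" by auto
  then have "f x = a 0 + (\<Sum>k=1..n. a k * cos (real k * x) + 0 * sin (real k * x))" for x
    using a by simp
  then show ?thesis by (rule trigpolyI)
qed

fun cheb :: "nat \<Rightarrow> real poly" where
  "cheb 0 = 1"
| "cheb (Suc 0) = [:0, 1:]"
| "cheb (Suc (Suc k)) = [:0, 2:] * cheb (Suc k) - cheb k"

lemma cheb: "degree (cheb k) \<le> k \<and> (\<forall>x. poly (cheb k) (cos x) = cos (real k * x))"
proof (induction k rule: cheb.induct)
  case 1 then show ?case by simp
next
  case 2 then show ?case by simp
next
  case (3 k)
  have deg: "degree (cheb (Suc (Suc k))) \<le> Suc (Suc k)"
  proof -
    have "degree ([:0, 2:] * cheb (Suc k)) \<le> Suc (Suc k)"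
      using degree_mult_le[of "[:0, 2:]" "cheb (Suc k)"] 3 by simp
    moreover have "degree (cheb k) \<le> Suc (Suc k)" using 3 by simp
    ultimately show ?thesis by (simp add: degree_diff_le)
  qed
  have "cos (real (Suc (Suc k)) * x) = 2 * cos x * cos (real (Suc k) * x) - cos (real k * x)" for x
  proof -
    have "cos (real (Suc (Suc k)) * x) = cos (real (Suc k) * x + x)" by (simp add: algebra_simps)
    moreover have "cos (real k * x) = cos (real (Suc k) * x - x)" by (simp add: algebra_simps)
    ultimately show ?thesis by (simp add: cos_add cos_diff)
  qed
  then show ?case using deg 3 by simp
qed

lemma even_part_poly:
  assumes "T \<in> trigpoly n"
  shows "\<exists>p. degree p \<le> n \<and> (\<forall>x. (T x + T (- x)) / 2 = poly p (cos x))"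
proof -
  obtain a b where T: "\<And>x. T x = a 0 + (\<Sum>k=1..n. a k * cos (real k * x) + b k * sin (real k * x))"
    using trigpolyD[OF assms] by blast
  define p where "p = [:a 0:] + (\<Sum>k=1..n. smult (a k) (cheb k))"
  have "degree p \<le> n" unfolding p_def
    by (intro degree_add_le degree_sum_le) (auto intro: order.trans[OF degree_smult_le] order.trans[OF conjunct1[OF cheb]])
  moreover have "(T x + T (- x)) / 2 = poly p (cos x)" for x
  proof -
    have "(T x + T (- x)) / 2 = a 0 + (\<Sum>k=1..n. a k * cos (real k * x))"
    proof -
      have "T x + T (- x) = 2 * a 0 + (\<Sum>k=1..n. 2 * (a k * cos (real k * x)))"
        unfolding T by (simp add: sum.distrib[symmetric] algebra_simps)
      then show ?thesis by (simp add: sum_distrib_left[symmetric])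
    qed
    also have "\<dots> = poly p (cos x)" unfolding p_def using cheb by (simp add: poly_sum)
    finally show ?thesis .
  qed
  ultimately show ?thesis by blast
qed

lemma affine_cos_poly:
  assumes "degree p \<le> n"
  shows "(\<lambda>t. poly p (\<alpha> + \<beta> * cos t)) \<in> trigpoly n"
proof -
  have d1: "degree [:\<alpha>, \<beta>:] \<le> 1" by (auto simp: degree_pCons_eq_if)
  have "degree p * degree [:\<alpha>, \<beta>:] \<le> n * 1" using assms d1 by (intro mult_le_mono)
  then have "degree (pcompose p [:\<alpha>, \<beta>:]) \<le> n"
    using degree_pcompose_le[of p "[:\<alpha>, \<beta>:]"] by linarith
  then have "(\<lambda>t. poly (pcompose p [:\<alpha>, \<beta>:]) (cos t)) \<in> trigpoly n"
    by (intro cospoly_trigpoly cp_poly)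
  then show ?thesis by (simp add: poly_pcompose algebra_simps)
qed



lemma sin_lip: fixes u v :: real shows "\<bar>sin u - sin v\<bar> \<le> \<bar>u - v\<bar>"
proof -
  have "\<bar>sin u - sin v\<bar> = 2 * \<bar>sin ((u - v) / 2)\<bar> * \<bar>cos ((u + v) / 2)\<bar>"
    by (simp add: sin_diff_sin abs_mult)
  also have "\<dots> \<le> 2 * \<bar>(u - v) / 2\<bar> * 1"
    by (intro mult_mono abs_sin_x_le_abs_x) auto
  finally show ?thesis by simp
qed

lemma sin_diff_lower:
  assumes "0 \<le> q" "q \<le> p" "p \<le> pi/3"
  shows "(p - q) / 2 \<le> sin p - sin q"
proof (cases "q = p")
  case True then show ?thesis by simp
next
  case False
  then have "q < p" using assms by simp
  obtain z where z: "q < z" "z < p" "sin p - sin q = (p - q) * cos z"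
    using MVT2[OF \<open>q < p\<close>, of sin cos] by (auto intro: DERIV_sin)
  have "cos (pi/3) \<le> cos z" using z assms by (intro cos_monotone_0_pi_le) auto
  then have "1/2 \<le> cos z" by (simp add: cos_60)
  then have "(p - q) * (1/2) \<le> (p - q) * cos z" using \<open>q < p\<close> by (intro mult_left_mono) auto
  then show ?thesis using z by simp
qed

lemma arcsin_ge:
  assumes "0 \<le> w" "w \<le> 1"
  shows "w \<le> arcsin w"
proof -
  have "w = sin (arcsin w)" using assms by simp
  also have "\<dots> \<le> arcsin w" using assms by (intro sin_x_le_x arcsin_nonneg) auto
  finally show ?thesis .
qed

lemma core1:
  assumes b: "0 < b" "b \<le> pi/2" and n: "1 \<le> n" and T: "T \<in> trigpoly n"
    and err: "\<forall>x\<in>{-b..b}. \<bar>\<bar>x\<bar> - T x\<bar> \<le> E"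
  shows "b / (300 * real n) \<le> E"
proof -
  define s where "s = sin (b/2)"
  have pi3: "pi / 4 \<le> pi / 3" by simp
  have s1: "0 < s" unfolding s_def using b by (intro sin_gt_zero) auto
  have s2: "s \<le> 1" unfolding s_def by simp
  have s3: "b / 4 \<le> s" unfolding s_def using sin_diff_lower[of 0 "b/2"] b by simp
  obtain p where p: "degree p \<le> n" "\<forall>x. (T x + T (- x)) / 2 = poly p (cos x)"
    using even_part_poly[OF T] by blast
  have Te_err: "\<bar>poly p (cos x) - x\<bar> \<le> E" if "0 \<le> x" "x \<le> b" for x
  proof -
    have "\<bar>\<bar>x\<bar> - T x\<bar> \<le> E" "\<bar>\<bar>-x\<bar> - T (-x)\<bar> \<le> E"
      using err[rule_format, of x] err[rule_format, of "-x"] that by auto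
    then have "\<bar>(T x + T (- x)) / 2 - x\<bar> \<le> E" using that unfolding abs_le_iff by (auto simp: field_simps)
    then show ?thesis using p(2) by simp
  qed
  define g where "g = (\<lambda>t. arcsin (s * \<bar>sin (t/2)\<bar>))"
  define G where "G = (\<lambda>t. 2 * g t)"
  have arg: "0 \<le> s * \<bar>sin (t/2)\<bar>" "s * \<bar>sin (t/2)\<bar> \<le> s" for t
    using s1 by (auto intro: mult_left_le)
  have g_range: "0 \<le> g t" "g t \<le> b/2" for t
  proof -
    show "0 \<le> g t" unfolding g_def using arg[of t] s2 by (intro arcsin_nonneg) auto
    have "g t \<le> arcsin s" unfolding g_def using arg[of t] s2 s1 by (intro arcsin_le_arcsin) (auto intro: order.trans[OF _ arg(1)])
    also have "arcsin s = b/2" unfolding s_def using b by (intro arcsin_sin) auto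
    finally show "g t \<le> b/2" .
  qed
  have sin_g: "sin (g t) = s * \<bar>sin (t/2)\<bar>" for t
    unfolding g_def using arg[of t] s2 by (intro sin_arcsin) auto
  have G_cos: "cos (G t) = (1 - s^2) + s^2 * cos t" for t
  proof -
    have "cos (G t) = 1 - 2 * sin (g t) ^ 2" unfolding G_def by (rule cos_double_sin)
    also have "\<dots> = 1 - 2 * s^2 * sin (t/2) ^ 2" by (simp add: sin_g power_mult_distrib)
    also have "\<dots> = (1 - s^2) + s^2 * cos t"
    proof -
      have h: "cos t = 1 - 2 * sin (t/2) ^ 2" using cos_double_sin[of "t/2"] by simp
      show ?thesis unfolding h by (simp add: algebra_simps)
    qed
    finally show ?thesis .
  qed
  define V where "V = (\<lambda>t. poly p ((1 - s^2) + s^2 * cos t))"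
  have V_tp: "V \<in> trigpoly n" unfolding V_def by (rule affine_cos_poly[OF p(1)])
  have V_G: "\<bar>V t - G t\<bar> \<le> E" for t
  proof -
    have "V t = poly p (cos (G t))" unfolding V_def G_cos ..
    moreover have "0 \<le> G t" "G t \<le> b" using g_range[of t] unfolding G_def by auto
    ultimately show ?thesis using Te_err by simp
  qed
  have E0: "0 \<le> E" using V_G[of 0] by linarith
  have G_lip: "\<bar>G u - G v\<bar> \<le> 2 * s * \<bar>u - v\<bar>" for u v
  proof -
    have gl: "\<bar>g u - g v\<bar> \<le> 2 * \<bar>sin (g u) - sin (g v)\<bar>"
    proof (cases "g v \<le> g u")
      case True
      then have "(g u - g v) / 2 \<le> sin (g u) - sin (g v)"
        using g_range[of u] g_range[of v] b by (intro sin_diff_lower) auto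
      then show ?thesis using True by simp
    next
      case False
      then have "(g v - g u) / 2 \<le> sin (g v) - sin (g u)"
        using g_range[of u] g_range[of v] b by (intro sin_diff_lower) auto
      then show ?thesis using False by simp
    qed
    have "\<bar>sin (g u) - sin (g v)\<bar> = s * \<bar>\<bar>sin (u/2)\<bar> - \<bar>sin (v/2)\<bar>\<bar>"
      using s1 by (simp add: sin_g right_diff_distrib[symmetric] abs_mult)
    also have "\<dots> \<le> s * \<bar>sin (u/2) - sin (v/2)\<bar>"
      using s1 by (intro mult_left_mono) auto
    also have "\<dots> \<le> s * \<bar>u/2 - v/2\<bar>"
      using s1 sin_lip by (intro mult_left_mono) auto
    also have "s * \<bar>u/2 - v/2\<bar> = s * \<bar>u - v\<bar> / 2"
      by (simp add: diff_divide_distrib[symmetric])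
    finally have "\<bar>sin (g u) - sin (g v)\<bar> \<le> s * \<bar>u - v\<bar> / 2" .
    then show ?thesis using gl unfolding G_def by simp
  qed
  have G_even: "G (- t) = G t" for t unfolding G_def g_def by simp
  have G0: "G 0 = 0" unfolding G_def g_def by simp
  define \<eta> where "\<eta> = 1 / (16 * real n)"
  have eta: "0 < \<eta>" "\<eta> \<le> 1/16" "real n * \<eta> = 1/16" unfolding \<eta>_def using n by (auto simp: field_simps)
  have G_low: "s * \<eta> \<le> G (2 * \<eta>)"
  proof -
    have "\<eta> / 2 \<le> sin \<eta>" using sin_diff_lower[of 0 \<eta>] eta pi_gt3 by simp
    then have "s * (\<eta> / 2) \<le> s * sin \<eta>" using s1 by (intro mult_left_mono) auto
    also have "s * sin \<eta> = s * \<bar>sin (2 * \<eta> / 2)\<bar>"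
      using eta pi_gt3 sin_ge_zero[of \<eta>] by simp
    also have "\<dots> \<le> g (2 * \<eta>)" unfolding g_def
      using arg[of "2*\<eta>"] s2 by (intro arcsin_ge) auto
    finally show ?thesis unfolding G_def by simp
  qed
  define W where "W = (\<lambda>t. V (t + \<eta>) - V (t + - \<eta>))"
  have W_tp: "W \<in> trigpoly n" unfolding W_def
    by (intro trigpoly_diff trigpoly_shift V_tp)
  define M where "M = 4 * s * \<eta> + 2 * E"
  have M: "0 < M" unfolding M_def using mult_pos_pos[OF s1 eta(1)] E0 by auto
  have W_bd: "\<forall>t. \<bar>W t\<bar> \<le> M"
  proof
    fix t
    have "\<bar>G (t + \<eta>) - G (t + - \<eta>)\<bar> \<le> 2 * s * \<bar>(t + \<eta>) - (t + - \<eta>)\<bar>" by (rule G_lip)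
    also have "\<dots> = 4 * s * \<eta>" using eta by simp
    finally have "\<bar>G (t + \<eta>) - G (t + - \<eta>)\<bar> \<le> 4 * s * \<eta>" .
    then show "\<bar>W t\<bar> \<le> M" unfolding W_def M_def
      using V_G[of "t + \<eta>"] V_G[of "t + - \<eta>"] by (auto simp: abs_le_iff)
  qed
  obtain z where z: "- \<eta> < z" "z < \<eta>" "W \<eta> - W (- \<eta>) = (\<eta> - (- \<eta>)) * deriv W z"
    using MVT2[of "- \<eta>" \<eta> W "deriv W"] eta trigpoly_deriv_in(2)[OF W_tp] by auto
  have dW: "\<bar>deriv W z\<bar> \<le> 2 * real n * M" by (rule bernstein[OF W_tp n M W_bd])
  have lowW: "2 * G (2 * \<eta>) - 4 * E \<le> W \<eta> - W (- \<eta>)"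
    unfolding W_def
    using V_G[of "2 * \<eta>"] V_G[of 0] V_G[of "- (2 * \<eta>)"] G_even[of "2 * \<eta>"] G0
    by (auto simp: abs_le_iff)
  have "W \<eta> - W (- \<eta>) \<le> 2 * \<eta> * (2 * real n * M)"
  proof -
    have "W \<eta> - W (- \<eta>) \<le> 2 * \<eta> * \<bar>deriv W z\<bar>" using z eta by (simp add: abs_mult)
    also have "\<dots> \<le> 2 * \<eta> * (2 * real n * M)" using dW eta by (intro mult_left_mono) auto
    finally show ?thesis .
  qed
  also have "2 * \<eta> * (2 * real n * M) = 4 * (real n * \<eta>) * M" by simp
  also have "\<dots> = s * \<eta> + E / 2" unfolding eta(3) M_def by simp
  finally have main: "2 * G (2 * \<eta>) - 4 * E \<le> s * \<eta> + E / 2" using lowW by linarith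
  then have "s * \<eta> \<le> 9 / 2 * E" using G_low by linarith
  moreover have "b / 4 * \<eta> \<le> s * \<eta>" using s3 eta by (intro mult_right_mono) auto
  ultimately have "b / 4 * \<eta> \<le> 9 / 2 * E" by linarith
  then have "b / (64 * real n) \<le> 9 / 2 * E" unfolding \<eta>_def using n by (simp add: field_simps)
  moreover have "b / (300 * real n) \<le> (2 / 9) * (b / (64 * real n))"
    using b n by (simp add: field_simps)
  ultimately show ?thesis by linarith
qed



lemma sup_ge:
  assumes "continuous_on {a..b} g" "x \<in> {a..b}"
  shows "\<bar>g x\<bar> \<le> supnorm_on a b g"
proof -
  have "compact ((\<lambda>x. \<bar>g x\<bar>) ` {a..b})"
    by (intro compact_continuous_image continuous_on_rabs assms(1)) simp
  then have "bdd_above ((\<lambda>x. \<bar>g x\<bar>) ` {a..b})"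
    by (intro bounded_imp_bdd_above compact_imp_bounded)
  then show ?thesis unfolding supnorm_on_def by (rule cSUP_upper[OF assms(2)])
qed

lemma sup_le:
  assumes "a \<le> b" "\<forall>x\<in>{a..b}. \<bar>g x\<bar> \<le> K"
  shows "supnorm_on a b g \<le> K"
  unfolding supnorm_on_def using assms by (intro cSUP_least) auto

lemma err_cont:
  assumes "T \<in> trigpoly n"
  shows "continuous_on S (\<lambda>x. \<bar>x\<bar> - T x)"
  by (intro continuous_on_diff continuous_on_rabs continuous_on_id trigpoly_cont[OF assms])

lemma part1:
  assumes b: "0 < b" "b \<le> pi" and n: "1 \<le> n" and T: "T \<in> trigpoly n"
  shows "1 / 600 * b / real n \<le> supnorm_on (-b) b (\<lambda>x. \<bar>x\<bar> - T x)"
proof -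
  define E where "E = supnorm_on (-b) b (\<lambda>x. \<bar>x\<bar> - T x)"
  define b0 where "b0 = min b (pi/2)"
  have b0: "0 < b0" "b0 \<le> pi/2" "b / 2 \<le> b0" unfolding b0_def using b by auto
  have "\<forall>x\<in>{-b0..b0}. \<bar>\<bar>x\<bar> - T x\<bar> \<le> E"
  proof
    fix x assume "x \<in> {-b0..b0}"
    then have "x \<in> {-b..b}" unfolding b0_def by auto
    then show "\<bar>\<bar>x\<bar> - T x\<bar> \<le> E" unfolding E_def
      using sup_ge[OF err_cont[OF T]] by blast
  qed
  then have "b0 / (300 * real n) \<le> E" by (rule core1[OF b0(1,2) n T])
  moreover have "b / (600 * real n) \<le> b0 / (300 * real n)"
    using b0 n by (simp add: field_simps)
  ultimately show ?thesis unfolding E_def by simp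
qed

lemma sin_trigpoly: "sin \<in> trigpoly 1"
  by (rule trigpolyI[where a="\<lambda>k. 0" and b="\<lambda>k. 1"]) simp

lemma c0_ge1:
  assumes "bernstein_const c0"
  shows "1 \<le> c0"
proof -
  have st: "sin \<in> trigpoly (Suc 0)" using sin_trigpoly by simp
  have H: "supnorm_on (-(pi/2)/2) ((pi/2)/2) (deriv sin) \<le> c0 / (pi/2) * real (Suc 0) * supnorm_on (-(pi/2)) (pi/2) sin"
    by (rule assms[unfolded bernstein_const_def, rule_format, of "pi/2" "Suc 0" sin])
       (use st pi_gt_zero in auto)
  have ds: "deriv sin = cos" by (rule ext, rule DERIV_imp_deriv, rule DERIV_sin)
  have A: "1 \<le> supnorm_on (-(pi/2)/2) ((pi/2)/2) (deriv sin)"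
    unfolding ds using sup_ge[of "-(pi/2)/2" "(pi/2)/2" cos 0] by (simp add: continuous_on_cos continuous_on_id)
  have B1: "supnorm_on (-(pi/2)) (pi/2) sin \<le> 1"
    by (rule sup_le) auto
  have B0: "0 \<le> supnorm_on (-(pi/2)) (pi/2) sin"
    using sup_ge[of "-(pi/2)" "pi/2" sin 0] by (simp add: continuous_on_sin continuous_on_id)
  have "1 \<le> c0 / (pi/2) * supnorm_on (-(pi/2)) (pi/2) sin" using order_trans[OF A H] by simp
  then have "1 \<le> c0 / (pi/2)"
  proof (cases "c0 \<le> 0")
    case True
    then have "c0 / (pi/2) * supnorm_on (-(pi/2)) (pi/2) sin \<le> 0"
      using B0 by (intro mult_nonpos_nonneg) (auto intro: divide_nonpos_pos)
    then show ?thesis using \<open>1 \<le> c0 / (pi/2) * supnorm_on (-(pi/2)) (pi/2) sin\<close> by linarith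
  next
    case False
    then have "c0 / (pi/2) * supnorm_on (-(pi/2)) (pi/2) sin \<le> c0 / (pi/2) * 1"
      using B1 by (intro mult_left_mono) auto
    then show ?thesis using \<open>1 \<le> c0 / (pi/2) * supnorm_on (-(pi/2)) (pi/2) sin\<close> by linarith
  qed
  then have "pi / 2 \<le> c0" by (simp add: field_simps)
  then show ?thesis using pi_gt3 by linarith
qed



lemma core2:
  assumes c0: "1 \<le> c0" and bc: "bernstein_const c0"
    and b: "0 < b" "b \<le> pi" and n: "1 \<le> n" and T: "T \<in> trigpoly n"
    and err: "\<forall>x\<in>{-b..b}. \<bar>\<bar>x\<bar> - T x\<bar> \<le> E"
  shows "1 / (80 * c0) * b / real n \<le> E"
proof (rule ccontr)
  assume "\<not> 1 / (80 * c0) * b / real n \<le> E"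
  then have Esmall: "E < b / (80 * c0 * real n)" by simp
  define Te where "Te = (\<lambda>x. 1/2 * (T x + T (- x)))"
  have Te_tp: "Te \<in> trigpoly n" unfolding Te_def
    by (intro trigpoly_scale trigpoly_add T trigpoly_reflect)
  have Te_even: "Te (- x) = Te x" for x unfolding Te_def by simp
  have Te_err: "\<bar>Te x - \<bar>x\<bar>\<bar> \<le> E" if "x \<in> {-b..b}" for x
  proof -
    have "\<bar>\<bar>x\<bar> - T x\<bar> \<le> E" "\<bar>\<bar>-x\<bar> - T (-x)\<bar> \<le> E"
      using err[rule_format, of x] err[rule_format, of "-x"] that by auto
    then show ?thesis unfolding Te_def abs_le_iff by (auto simp: field_simps)
  qed
  have npos: "0 < real n" using n by simp
  have cn: "0 < c0 * real n" using c0 npos by simp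
  define h where "h = b / (10 * c0 * real n)"
  have h0: "0 < h" unfolding h_def using b cn by simp
  have hb: "h \<le> b / 10"
  proof -
    have "b / (10 * c0 * real n) \<le> b / (10 * 1)"
    proof -
      have "1 * 1 \<le> c0 * real n" using c0 n by (intro mult_mono) auto
      then show ?thesis using b c0 n by (intro divide_left_mono) auto
    qed
    then show ?thesis unfolding h_def by simp
  qed
  have Eh: "E < h / 8" using Esmall unfolding h_def by (simp add: field_simps)
  define b' where "b' = b - h"
  have b': "0 < b'" "b' < pi" "9 * b / 10 \<le> b'" unfolding b'_def using hb h0 b by auto
  define S where "S = (\<lambda>x. Te (x + h) - Te (x + - h))"
  have S_tp: "S \<in> trigpoly n" unfolding S_def by (intro trigpoly_diff trigpoly_shift Te_tp)
  have S_odd: "\<forall>x. S (- x) = - S x"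
  proof
    fix x
    have "Te (- x + h) = Te (x + - h)" using Te_even[of "x + - h"] by simp
    moreover have "Te (- x + - h) = Te (x + h)" using Te_even[of "x + h"] by simp
    ultimately show "S (- x) = - S x" unfolding S_def by simp
  qed
  have S_bd: "\<forall>x\<in>{-b'..b'}. \<bar>S x\<bar> \<le> 2 * h + 2 * E"
  proof
    fix x assume x: "x \<in> {-b'..b'}"
    then have in1: "x + h \<in> {-b..b}" and in2: "x + - h \<in> {-b..b}" unfolding b'_def using h0 by auto
    have "\<bar>\<bar>x + h\<bar> - \<bar>x + - h\<bar>\<bar> \<le> \<bar>(x + h) - (x + - h)\<bar>" by (rule abs_triangle_ineq3)
    then have "\<bar>\<bar>x + h\<bar> - \<bar>x + - h\<bar>\<bar> \<le> 2 * h" using h0 by simp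
    then show "\<bar>S x\<bar> \<le> 2 * h + 2 * E" unfolding S_def
      using Te_err[OF in1] Te_err[OF in2] by (auto simp: abs_le_iff)
  qed
  have supS: "supnorm_on (-b') b' S \<le> 2 * h + 2 * E"
    using b' S_bd by (intro sup_le) auto
  have bern: "supnorm_on (-b'/2) (b'/2) (deriv S) \<le> c0 / b' * real n * supnorm_on (-b') b' S"
    using bc unfolding bernstein_const_def using b' n S_tp S_odd by blast
  have K0: "0 \<le> c0 / b' * real n" using c0 b' by simp
  have dS_tp: "deriv S \<in> trigpoly n" by (rule trigpoly_deriv_in(1)[OF S_tp])
  obtain z where z: "- h < z" "z < h" "S h - S (- h) = (h - (- h)) * deriv S z"
    using MVT2[of "- h" h S "deriv S"] h0 trigpoly_deriv_in(2)[OF S_tp] by auto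
  have zin: "z \<in> {-b'/2..b'/2}" using z hb b' b by auto
  have "\<bar>deriv S z\<bar> \<le> supnorm_on (-b'/2) (b'/2) (deriv S)"
    by (rule sup_ge[OF trigpoly_cont[OF dS_tp] zin])
  also have "\<dots> \<le> c0 / b' * real n * (2 * h + 2 * E)"
    using bern supS K0 by (meson mult_left_mono order_trans)
  finally have dSz: "\<bar>deriv S z\<bar> \<le> c0 / b' * real n * (2 * h + 2 * E)" .
  have low: "4 * h - 4 * E \<le> S h - S (- h)"
  proof -
    have i1: "2 * h \<in> {-b..b}" "0 \<in> {-b..b}" "- (2 * h) \<in> {-b..b}" using hb h0 b by auto
    show ?thesis unfolding S_def
      using Te_err[OF i1(1)] Te_err[OF i1(2)] Te_err[OF i1(3)] h0
      by (auto simp: abs_le_iff)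
  qed
  have Kh: "c0 / b' * real n * h \<le> 1 / 9"
  proof -
    have "c0 / b' * real n * h = (b / 10) / b'" unfolding h_def using cn b' c0 npos by (simp add: field_simps)
    also have "\<dots> \<le> (b / 10) / (9 * b / 10)" using b b' by (intro divide_left_mono) auto
    also have "\<dots> = 1 / 9" using b by simp
    finally show ?thesis .
  qed
  have "2 * h * deriv S z \<le> 2 * h * \<bar>deriv S z\<bar>" using h0 by (intro mult_left_mono) auto
  moreover have "(h - - h) * deriv S z = 2 * h * deriv S z" by simp
  ultimately have "4 * h - 4 * E \<le> 2 * h * \<bar>deriv S z\<bar>" using low z(3) by linarith
  also have "\<dots> \<le> 2 * h * (c0 / b' * real n * (2 * h + 2 * E))"
    using dSz h0 by (intro mult_left_mono) auto
  also have "\<dots> = 4 * (c0 / b' * real n * h) * (h + E)" by (simp add: algebra_simps add_divide_distrib)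
  also have "\<dots> \<le> 4 * (1 / 9) * (h + E)"
    using Kh h0 Eh Te_err[of 0] b by (intro mult_left_mono mult_right_mono) auto
  finally have "4 * h - 4 * E \<le> 4 / 9 * (h + E)" by simp
  moreover have "4 / 9 * (h + E) = 4 / 9 * h + 4 / 9 * E" by (simp add: distrib_left)
  ultimately show False using Eh h0 by linarith
qed


theorem lemma3p3:
  shows "(\<exists>c1>0. \<forall>b n T. 0 < b \<and> b \<le> pi \<and> n \<ge> 1 \<and> T \<in> trigpoly n \<longrightarrow>
            supnorm_on (-b) b (\<lambda>x. \<bar>x\<bar> - T x) \<ge> c1 * b / real n)
       \<and> (\<forall>c0>0. bernstein_const c0 \<longrightarrow>
            (\<forall>b n T. 0 < b \<and> b \<le> pi \<and> n \<ge> 1 \<and> T \<in> trigpoly n \<longrightarrow>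
              supnorm_on (-b) b (\<lambda>x. \<bar>x\<bar> - T x) \<ge> (1 / (80 * c0)) * b / real n))"
proof (intro conjI)
  show "\<exists>c1>0. \<forall>b n T. 0 < b \<and> b \<le> pi \<and> n \<ge> 1 \<and> T \<in> trigpoly n \<longrightarrow>
            supnorm_on (-b) b (\<lambda>x. \<bar>x\<bar> - T x) \<ge> c1 * b / real n"
  proof (intro exI[of _ "1/600"] conjI allI impI)
    show "(0::real) < 1/600" by simp
    fix b :: real and n :: nat and T :: "real \<Rightarrow> real"
    assume H: "0 < b \<and> b \<le> pi \<and> n \<ge> 1 \<and> T \<in> trigpoly n"
    then have b: "0 < b" "b \<le> pi" and n: "1 \<le> n" and T: "T \<in> trigpoly n" by auto
    show "supnorm_on (-b) b (\<lambda>x. \<bar>x\<bar> - T x) \<ge> 1/600 * b / real n"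
      by (rule part1[OF b n T])
  qed
  show "\<forall>c0>0. bernstein_const c0 \<longrightarrow>
            (\<forall>b n T. 0 < b \<and> b \<le> pi \<and> n \<ge> 1 \<and> T \<in> trigpoly n \<longrightarrow>
              supnorm_on (-b) b (\<lambda>x. \<bar>x\<bar> - T x) \<ge> (1 / (80 * c0)) * b / real n)"
  proof (intro allI impI)
    fix c0 b :: real and n :: nat and T :: "real \<Rightarrow> real"
    assume "0 < c0" and bc: "bernstein_const c0"
      and H: "0 < b \<and> b \<le> pi \<and> n \<ge> 1 \<and> T \<in> trigpoly n"
    then have b: "0 < b" "b \<le> pi" and n: "1 \<le> n" and T: "T \<in> trigpoly n" by auto
    have err: "\<forall>x\<in>{-b..b}. \<bar>\<bar>x\<bar> - T x\<bar> \<le> supnorm_on (-b) b (\<lambda>x. \<bar>x\<bar> - T x)"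
      using sup_ge[OF err_cont[OF T]] by blast
    show "supnorm_on (-b) b (\<lambda>x. \<bar>x\<bar> - T x) \<ge> (1 / (80 * c0)) * b / real n"
      using core2[OF c0_ge1[OF bc] bc b n T err] .
  qed
qed

end
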